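(* Let $c>0$, $T>0$ and $\Delta_1,\dots,\Delta_K>0$. Let $\Phi_c=\sup\{x\in\mathbb{R}:\sum_{i=1}^K\max\{\frac{x-\ln\Delta_i^{-1}}{c\Delta_i^2/2},0\}\le T\}$. Then the vector $(x_1,\dots,x_K)$ with \[ x_i=\max\Big\{\frac{\Phi_c-\ln\Delta_i^{-1}}{c\Delta_i^2/2},\,0\Big\} \] is an optimal solution of the program $\mathscr{P}_c(\{\Delta_i\}_{i=1}^K,T)$.
   Context: For $c>0$, $T\ge0$ and positive reals $\Delta_1,\dots,\Delta_K$, the program $\mathscr{P}_c(\{\Delta_i\}_{i=1}^K,T)$ is: minimize $\sum_{i=1}^K\exp(-c x_i\Delta_i^2)$ subject to $x_1+\dots+x_K=T$, $x_i\ge0$; its optimal value is also denoted $\mathscr{P}_c(\{\Delta_i\}_{i=1}^K,T)$. *)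

theory Defs
  imports Complex_Main
begin

definition P_feasible :: "nat \<Rightarrow> real \<Rightarrow> (nat \<Rightarrow> real) \<Rightarrow> bool" where
  "P_feasible K T x \<longleftrightarrow> (\<forall>i\<in>{1..K}. 0 \<le> x i) \<and> (\<Sum>i=1..K. x i) = T"

definition P_obj :: "real \<Rightarrow> (nat \<Rightarrow> real) \<Rightarrow> nat \<Rightarrow> (nat \<Rightarrow> real) \<Rightarrow> real" where
  "P_obj c \<Delta> K x = (\<Sum>i=1..K. exp (- c * x i * (\<Delta> i)\<^sup>2))"

definition P_optimal :: "real \<Rightarrow> (nat \<Rightarrow> real) \<Rightarrow> nat \<Rightarrow> real \<Rightarrow> (nat \<Rightarrow> real) \<Rightarrow> bool" where
  "P_optimal c \<Delta> K T x \<longleftrightarrow> P_feasible K T x \<and>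
     (\<forall>y. P_feasible K T y \<longrightarrow> P_obj c \<Delta> K x \<le> P_obj c \<Delta> K y)"

end

theory Submission
  imports Defs
begin

lemma exp_tangent: "exp (u::real) \<ge> exp v * (1 + u - v)"
proof -
  have "exp u = exp v * exp (u - v)" by (simp add: exp_diff)
  moreover have "1 + (u - v) \<le> exp (u - v)" by (rule exp_ge_add_one_self)
  ultimately show ?thesis by (metis add_diff_eq exp_ge_zero mult_left_mono)
qed

lemma exp2ln: "(d::real) > 0 \<Longrightarrow> exp (2 * ln d) = d\<^sup>2"
proof -
  assume d: "d > 0"
  have "exp (2 * ln d) = exp (ln d + ln d)" by simp
  also have "\<dots> = d * d" using d by (simp only: exp_add exp_ln)
  finally show ?thesis by (simp add: power2_eq_square)
qed

lemma term_bound: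
  fixes c d P y :: real
  assumes c: "c > 0" and d: "d > 0" and y: "y \<ge> 0"
  defines "x \<equiv> max ((P - ln (inverse d)) / (c * d\<^sup>2 / 2)) 0"
  shows "exp (- c * y * d\<^sup>2) \<ge> exp (- c * x * d\<^sup>2) - c * exp (-2*P) * (y - x)"
proof -
  have t: "exp (- c * y * d\<^sup>2) \<ge> exp (- c * x * d\<^sup>2) - exp (- c * x * d\<^sup>2) * (c * d\<^sup>2) * (y - x)"
    using exp_tangent[where u="- c * y * d\<^sup>2" and v="- c * x * d\<^sup>2"] by (simp add: algebra_simps)
  have b: "c * d\<^sup>2 / 2 > 0" using c d by simp
  have ln: "ln (inverse d) = - ln d" using d by (simp add: ln_inverse)
  show ?thesis
  proof (cases "(P - ln (inverse d)) / (c * d\<^sup>2 / 2) > 0")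
    case True
    then have xe: "x = (P + ln d) / (c * d\<^sup>2 / 2)" unfolding x_def using ln by simp
    have "c * x * d\<^sup>2 = 2 * (P + ln d)" using xe c d by (simp add: field_simps)
    then have e: "- c * x * d\<^sup>2 = -2*P + - (2 * ln d)" by simp
    have e2: "exp (2 * ln d) = d\<^sup>2" using d by (simp add: exp2ln)
    have "exp (- c * x * d\<^sup>2) = exp (-2*P) * exp (- (2 * ln d))" by (simp only: e exp_add)
    also have "exp (- (2 * ln d)) = inverse (d\<^sup>2)" by (simp only: exp_minus e2)
    finally have "exp (- c * x * d\<^sup>2) * d\<^sup>2 = exp (-2*P)" using d by simp
    then have q: "exp (- c * x * d\<^sup>2) * (c * d\<^sup>2) = c * exp (-2*P)"
      by (metis mult.assoc mult.commute)
    show ?thesis using t unfolding q .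
  next
    case False
    then have x0: "x = 0" unfolding x_def by simp
    have "P - ln (inverse d) \<le> 0" using False b by (meson divide_pos_pos not_le)
    then have "P \<le> - ln d" using ln by simp
    then have "exp (2 * ln d) \<le> exp (-2*P)" by simp
    moreover have "exp (2 * ln d) = d\<^sup>2" using d by (simp add: exp2ln)
    ultimately have "c * d\<^sup>2 * y \<le> c * exp (-2*P) * y" using c y by (simp add: mult_right_mono)
    then show ?thesis using t x0 by simp
  qed
qed

theorem lemma3:
  fixes c T :: real and K :: nat and \<Delta> :: "nat \<Rightarrow> real"
  assumes "c > 0" and "T > 0" and "K \<ge> 1"
    and "\<And>i. i \<in> {1..K} \<Longrightarrow> \<Delta> i > 0"
  defines "\<Phi> \<equiv> Sup {y::real. (\<Sum>i=1..K. max ((y - ln (inverse (\<Delta> i))) / (c * (\<Delta> i)\<^sup>2 / 2)) 0) \<le> T}"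
  shows "P_optimal c \<Delta> K T (\<lambda>i. max ((\<Phi> - ln (inverse (\<Delta> i))) / (c * (\<Delta> i)\<^sup>2 / 2)) 0)"
proof -
  define a where "a i = ln (inverse (\<Delta> i))" for i
  define b where "b i = c * (\<Delta> i)\<^sup>2 / 2" for i
  define g where "g y = (\<Sum>i=1..K. max ((y - a i) / b i) 0)" for y
  have bpos: "b i > 0" if "i \<in> {1..K}" for i using assms(1) assms(4)[OF that] by (simp add: b_def)
  have cont: "continuous_on UNIV g" unfolding g_def by (intro continuous_intros) (use bpos in force)
  have mono: "g y \<le> g z" if "y \<le> z" for y z
    unfolding g_def
  proof (rule sum_mono)
    fix i assume i: "i \<in> {1..K}"
    show "max ((y - a i) / b i) 0 \<le> max ((z - a i) / b i) 0"
      using that bpos[OF i] by (intro max.mono divide_right_mono) auto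
  qed
  have ne: "{1..K} \<noteq> {}" using assms(3) by simp
  define L where "L = Min (a ` {1..K})"
  have gL: "g L = 0" unfolding g_def
  proof (rule sum.neutral, intro ballI)
    fix i assume i: "i \<in> {1..K}"
    have "L \<le> a i" unfolding L_def using i by (intro Min_le) auto
    then show "max ((L - a i) / b i) 0 = 0" using bpos[OF i] by (simp add: divide_nonpos_pos)
  qed
  define U where "U = a 1 + b 1 * T"
  have one: "(1::nat) \<in> {1..K}" using assms(3) by simp
  have gU: "T \<le> g U"
  proof -
    have "max ((U - a 1) / b 1) 0 \<le> g U" unfolding g_def
      by (rule member_le_sum[OF one]) auto
    moreover have "(U - a 1) / b 1 = T" using bpos[OF one] by (simp add: U_def)
    ultimately show ?thesis by simp
  qed
  have LU: "L \<le> U"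
  proof (rule ccontr)
    assume "\<not> L \<le> U" then have "g U \<le> g L" using mono by simp
    then show False using gL gU assms(2) by simp
  qed
  obtain y0 where y0: "g y0 = T"
    using IVT'[of g L T U] gL gU LU assms(2) continuous_on_subset[OF cont] by auto
  have strict: "T < g z" if "y0 < z" for z
  proof -
    obtain i where i: "i \<in> {1..K}" and pos: "max ((y0 - a i) / b i) 0 \<noteq> 0"
      using y0 assms(2) unfolding g_def by (metis (no_types, lifting) less_irrefl sum.neutral)
    have "y0 > a i" using pos bpos[OF i] by (cases "y0 \<le> a i") (auto simp: max_def divide_nonpos_pos)
    have "g y0 < g z" unfolding g_def
    proof (rule sum_strict_mono_ex1)
      show "\<forall>j\<in>{1..K}. max ((y0 - a j) / b j) 0 \<le> max ((z - a j) / b j) 0"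
      proof
        fix j assume j: "j \<in> {1..K}"
        show "max ((y0 - a j) / b j) 0 \<le> max ((z - a j) / b j) 0"
          using that bpos[OF j] by (intro max.mono divide_right_mono) auto
      qed
      show "\<exists>j\<in>{1..K}. max ((y0 - a j) / b j) 0 < max ((z - a j) / b j) 0"
      proof (rule bexI[OF _ i])
        have h1: "(y0 - a i) / b i < (z - a i) / b i"
          using that bpos[OF i] by (intro divide_strict_right_mono) auto
        have h2: "0 < (z - a i) / b i" using \<open>y0 > a i\<close> that bpos[OF i] by simp
        show "max ((y0 - a i) / b i) 0 < max ((z - a i) / b i) 0" using h1 h2 by simp
      qed
    qed simp
    then show ?thesis using y0 by simp
  qed
  have S: "{y::real. g y \<le> T} = {..y0}"
  proof (intro set_eqI iffI)
    fix y assume "y \<in> {y. g y \<le> T}" then show "y \<in> {..y0}" using strict[of y] by (metis mem_Collect_eq not_less atMost_iff)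
  next
    fix y assume "y \<in> {..y0}" then show "y \<in> {y. g y \<le> T}" using mono y0 by force
  qed
  have Phi: "\<Phi> = y0" unfolding \<Phi>_def using S by (simp add: g_def a_def b_def)
  define x where "x i = max ((\<Phi> - ln (inverse (\<Delta> i))) / (c * (\<Delta> i)\<^sup>2 / 2)) 0" for i
  have sumx: "(\<Sum>i=1..K. x i) = T" using y0 Phi by (simp add: x_def g_def a_def b_def)
  have feas: "P_feasible K T x" unfolding P_feasible_def using sumx by (simp add: x_def)
  have opt: "P_obj c \<Delta> K x \<le> P_obj c \<Delta> K y" if fy: "P_feasible K T y" for y
  proof -
    have "P_obj c \<Delta> K y \<ge> (\<Sum>i=1..K. exp (- c * x i * (\<Delta> i)\<^sup>2) - c * exp (-2*\<Phi>) * (y i - x i))"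
      unfolding P_obj_def
    proof (rule sum_mono)
      fix i assume i: "i \<in> {1..K}"
      show "exp (- c * x i * (\<Delta> i)\<^sup>2) - c * exp (-2*\<Phi>) * (y i - x i) \<le> exp (- c * y i * (\<Delta> i)\<^sup>2)"
        unfolding x_def using term_bound[OF assms(1) assms(4)[OF i], of "y i" \<Phi>] fy i
        by (auto simp: P_feasible_def)
    qed
    also have "(\<Sum>i=1..K. exp (- c * x i * (\<Delta> i)\<^sup>2) - c * exp (-2*\<Phi>) * (y i - x i))
        = P_obj c \<Delta> K x - c * exp (-2*\<Phi>) * ((\<Sum>i=1..K. y i) - (\<Sum>i=1..K. x i))"
      unfolding P_obj_def by (simp add: sum_subtractf flip: sum_distrib_left)
    also have "\<dots> = P_obj c \<Delta> K x" using fy sumx by (simp add: P_feasible_def)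
    finally show ?thesis .
  qed
  have xe: "x = (\<lambda>i. max ((\<Phi> - ln (inverse (\<Delta> i))) / (c * (\<Delta> i)\<^sup>2 / 2)) 0)"
    by (rule ext) (simp only: x_def)
  show ?thesis unfolding P_optimal_def xe[symmetric] using feas opt by blast
qed

end
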